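(* Let $s\ge1$ and $v\ge 2$ be integers. If there exists an orthogonal array OA$(s,2s,v)$, then there exists a $(t_i,t_o,s,v)$-AONT for all integers $t_i,t_o$ with $1\le t_i\le t_o\le s$.
   Context: An $(N,k,v)$-array is an $N\times k$ array with entries from an alphabet $\Gamma$ of size $v$. For a set $D$ of columns, the array is unbiased with respect to $D$ if the rows of the subarray consisting of the columns in $D$ contain every $|D|$-tuple over $\Gamma$ exactly $N/v^{|D|}$ times. An orthogonal array OA$(t,k,v)$ is a $(v^t,k,v)$-array that is unbiased with respect to every set of $t$ columns. For integers $1\le t_i\le t_o\le s$, a $(t_i,t_o,s,v)$-all-or-nothing transform (AONT) is a $(v^s,2s,v)$-array with columns labelled $1,\dots,2s$ that is unbiased with respect to $\{1,\dots,s\}$, with respect to $\{s+1,\dots,2s\}$, and with respect to $I\cup J$ for every $I\subseteq\{1,\dots,s\}$ with $|I|=t_i$ and every $J\subseteq\{s+1,\dots,2s\}$ with $|J|=s-t_o$. *)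

theory Defs
  imports Main
begin

definition is_array :: "'a set \<Rightarrow> nat \<Rightarrow> nat \<Rightarrow> (nat \<Rightarrow> nat \<Rightarrow> 'a) \<Rightarrow> bool" where
  "is_array G N k A \<longleftrightarrow> (\<forall>i<N. \<forall>j\<in>{1..k}. A i j \<in> G)"

text \<open>Unbiased w.r.t. column set D: every |D|-tuple over G (a map D -> G)
 occurs in exactly N / v^|D| rows (stated multiplicatively).\<close>

definition unbiased :: "'a set \<Rightarrow> nat \<Rightarrow> (nat \<Rightarrow> nat \<Rightarrow> 'a) \<Rightarrow> nat set \<Rightarrow> bool" where
  "unbiased G N A D \<longleftrightarrow>
     (\<forall>f. (\<forall>j\<in>D. f j \<in> G) \<longrightarrow>
        card {i. i < N \<and> (\<forall>j\<in>D. A i j = f j)} * card G ^ card D = N)"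

definition is_OA :: "'a set \<Rightarrow> nat \<Rightarrow> nat \<Rightarrow> (nat \<Rightarrow> nat \<Rightarrow> 'a) \<Rightarrow> bool" where
  "is_OA G t k A \<longleftrightarrow> is_array G (card G ^ t) k A \<and>
     (\<forall>D. D \<subseteq> {1..k} \<and> card D = t \<longrightarrow> unbiased G (card G ^ t) A D)"

definition is_AONT :: "'a set \<Rightarrow> nat \<Rightarrow> nat \<Rightarrow> nat \<Rightarrow> (nat \<Rightarrow> nat \<Rightarrow> 'a) \<Rightarrow> bool" where
  "is_AONT G ti to s A \<longleftrightarrow> is_array G (card G ^ s) (2 * s) A \<and>
     unbiased G (card G ^ s) A {1..s} \<and>
     unbiased G (card G ^ s) A {s+1..2*s} \<and>
     (\<forall>I J. I \<subseteq> {1..s} \<and> card I = ti \<and> J \<subseteq> {s+1..2*s} \<and> card J = s - to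
        \<longrightarrow> unbiased G (card G ^ s) A (I \<union> J))"

end

theory Submission
  imports Defs
begin

lemma unb_remove:
  assumes u: "unbiased G N A D" and fD: "finite D" and fG: "finite G" and ne: "G \<noteq> {}"
    and x: "x \<in> D" and arr: "\<forall>i<N. A i x \<in> G"
  shows "unbiased G N A (D - {x})"
  unfolding unbiased_def
proof (intro allI impI)
  fix f assume f: "\<forall>j\<in>D - {x}. f j \<in> G"
  define c where "c = N div card G ^ card D"
  have vpos: "card G > 0" using fG ne by (simp add: card_gt_0_iff)
  define S where "S a = {i. i < N \<and> (\<forall>j\<in>D. A i j = (f(x:=a)) j)}" for a
  have Sa: "card (S a) = c" if "a \<in> G" for a
  proof -
    have "\<forall>j\<in>D. (f(x:=a)) j \<in> G" using f that by auto
    then have "card (S a) * card G ^ card D = N" using u unfolding unbiased_def S_def by blast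
    then show ?thesis unfolding c_def using vpos by auto
  qed
  have eq: "{i. i < N \<and> (\<forall>j\<in>D - {x}. A i j = f j)} = (\<Union>a\<in>G. S a)"
  proof (intro equalityI subsetI)
    fix i assume "i \<in> {i. i < N \<and> (\<forall>j\<in>D - {x}. A i j = f j)}"
    then have "i < N" "\<forall>j\<in>D - {x}. A i j = f j" by auto
    then have "i \<in> S (A i x)" "A i x \<in> G" using arr unfolding S_def by auto
    then show "i \<in> (\<Union>a\<in>G. S a)" by blast
  next
    fix i assume "i \<in> (\<Union>a\<in>G. S a)"
    then show "i \<in> {i. i < N \<and> (\<forall>j\<in>D - {x}. A i j = f j)}"
    proof -
      from \<open>i \<in> (\<Union>a\<in>G. S a)\<close> obtain a where "i < N" "\<forall>j\<in>D. A i j = (f(x:=a)) j"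
        unfolding S_def by blast
      then have "\<forall>j\<in>D - {x}. A i j = f j" by auto
      then show ?thesis using \<open>i < N\<close> by simp
    qed
  qed
  have "card (\<Union>a\<in>G. S a) = (\<Sum>a\<in>G. card (S a))"
  proof (rule card_UN_disjoint)
    show "finite G" by (rule fG)
    show "\<forall>a\<in>G. finite (S a)" unfolding S_def by auto
    show "\<forall>a\<in>G. \<forall>b\<in>G. a \<noteq> b \<longrightarrow> S a \<inter> S b = {}"
    proof (intro ballI impI)
      fix a b assume "a \<in> G" "b \<in> G" "a \<noteq> b"
      show "S a \<inter> S b = {}"
      proof (rule ccontr)
        assume "S a \<inter> S b \<noteq> {}" then obtain i where "i \<in> S a" "i \<in> S b" by blast
        then have "A i x = a" "A i x = b" using x unfolding S_def by auto
        then show False using \<open>a \<noteq> b\<close> by simp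
      qed
    qed
  qed
  also have "\<dots> = card G * c" using Sa by simp
  finally have cs: "card {i. i < N \<and> (\<forall>j\<in>D - {x}. A i j = f j)} = card G * c" using eq by simp
  have cD: "card D = Suc (card (D - {x}))" using card_Suc_Diff1[OF fD x] by simp
  obtain a where a: "a \<in> G" using ne by auto
  have "\<forall>j\<in>D. (f(x:=a)) j \<in> G" using f a by auto
  then have "card (S a) * card G ^ card D = N" using u unfolding unbiased_def S_def by blast
  then have "c * card G ^ card D = N" using Sa a by simp
  then show "card {i. i < N \<and> (\<forall>j\<in>D - {x}. A i j = f j)} * card G ^ card (D - {x}) = N"
    using cs cD by (simp add: mult_ac)
qed

lemma unb_sub:
  assumes fE: "finite E"
  shows "unbiased G N A D \<Longrightarrow> finite D \<Longrightarrow> finite G \<Longrightarrow> G \<noteq> {} \<Longrightarrow> E \<subseteq> D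
    \<Longrightarrow> (\<forall>i<N. \<forall>j\<in>D. A i j \<in> G) \<Longrightarrow> unbiased G N A (D - E)"
  using fE
proof (induction E rule: finite_induct)
  case empty then show ?case by simp
next
  case (insert y E)
  have "unbiased G N A (D - E)" using insert by auto
  then have "unbiased G N A ((D - E) - {y})"
    using insert by (intro unb_remove) auto
  moreover have "(D - E) - {y} = D - insert y E" by auto
  ultimately show ?case by simp
qed

theorem mainTheorem2:
  fixes G :: "'a set" and s v :: nat
  assumes "s \<ge> 1" and "v \<ge> 2" and "finite G" and "card G = v"
    and "\<exists>A. is_OA G s (2 * s) A"
  shows "\<forall>ti to. 1 \<le> ti \<and> ti \<le> to \<and> to \<le> s \<longrightarrow> (\<exists>A. is_AONT G ti to s A)"
proof (intro allI impI)
  fix ti to assume t: "1 \<le> ti \<and> ti \<le> to \<and> to \<le> s"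
  obtain A where A: "is_OA G s (2 * s) A" using assms by blast
  have arr: "is_array G (card G ^ s) (2 * s) A" using A by (simp add: is_OA_def)
  have oa: "\<And>D. D \<subseteq> {1..2*s} \<Longrightarrow> card D = s \<Longrightarrow> unbiased G (card G ^ s) A D"
    using A by (simp add: is_OA_def)
  have ne: "G \<noteq> {}" using assms by auto
  have main: "unbiased G (card G ^ s) A (I \<union> J)"
    if I: "I \<subseteq> {1..s}" "card I = ti" and J: "J \<subseteq> {s+1..2*s}" "card J = s - to" for I J
  proof -
    have fIJ: "finite (I \<union> J)" using I J finite_subset by (metis finite_Un finite_atLeastAtMost)
    have disj: "I \<inter> J = {}"
    proof (rule ccontr)
      assume "I \<inter> J \<noteq> {}" then obtain y where "y \<in> I" "y \<in> J" by auto
      then show False using I(1) J(1) by force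
    qed
    have cIJ: "card (I \<union> J) = ti + (s - to)"
      using card_Un_disjoint[OF _ _ disj] I J finite_subset by (metis finite_atLeastAtMost)
    have sub: "I \<union> J \<subseteq> {1..2*s}" using I J by auto
    have "card ({1..2*s} - (I \<union> J)) = 2*s - (ti + (s - to))"
      using card_Diff_subset[OF fIJ sub] cIJ by simp
    moreover have "s - (ti + (s - to)) \<le> 2*s - (ti + (s - to))" by simp
    ultimately obtain E where E: "E \<subseteq> {1..2*s} - (I \<union> J)" "card E = s - (ti + (s - to))"
      by (metis obtain_subset_with_card_n)
    define D where "D = I \<union> J \<union> E"
    have fE: "finite E" using E finite_subset by (metis finite_Diff finite_atLeastAtMost)
    have DE: "D - E = I \<union> J" using E unfolding D_def by auto
    have "card D = card (I \<union> J) + card E" unfolding D_def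
      using E fE fIJ by (subst card_Un_disjoint) auto
    then have cD: "card D = s" using cIJ E t by simp
    have Dsub: "D \<subseteq> {1..2*s}" using sub E unfolding D_def by auto
    have "unbiased G (card G ^ s) A (D - E)"
      using unb_sub[OF fE oa[OF Dsub cD]] Dsub arr ne assms(3) finite_subset
      unfolding is_array_def D_def by (metis finite_atLeastAtMost subset_iff Un_upper2)
    then show ?thesis using DE by simp
  qed
  show "\<exists>A. is_AONT G ti to s A"
    unfolding is_AONT_def
  proof (intro exI conjI)
    show "is_array G (card G ^ s) (2 * s) A" by (rule arr)
    show "unbiased G (card G ^ s) A {1..s}" by (rule oa) auto
    show "unbiased G (card G ^ s) A {s + 1..2 * s}" by (rule oa) auto
    show "\<forall>I J. I \<subseteq> {1..s} \<and> card I = ti \<and> J \<subseteq> {s + 1..2 * s} \<and> card J = s - to \<longrightarrow>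
        unbiased G (card G ^ s) A (I \<union> J)" using main by blast
  qed
qed

end
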